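(* Let $p_N(x)=\prod_{i=1}^N(x-z_i)$ with $z_1,\dots,z_N\in\mathbb{C}$ pairwise distinct, and let $\omega_N=\{x_1,\dots,x_N\}\subset\mathbb{S}^2$ with $\pi_{\mathbb{S}^2}(x_i)=z_i$. Then $$\mathcal{E}_{\log}(\omega_N)-\sum_{i=1}^N\log\mu_{\rm norm}(p_N,z_i)=-N\log\Big(\frac{\sqrt{N(N+1)}}{2}\Big)-N\log\Big(\Big(\int_{\mathbb{S}^2}\prod_{j=1}^N|p-x_j|^2\,d\sigma(p)\Big)^{1/2}\Big),$$ where $\sigma$ is the surface measure on $\mathbb{S}^2$ normalized so that $\sigma(\mathbb{S}^2)=1$.
   Context: $\mathbb{S}^2$ is the unit sphere in $\mathbb{R}^3$; $\pi_{\mathbb{S}^2}(a,b,c)=\frac{a+ib}{1-c}$. $\mathcal{E}_{\log}(\{x_1,\dots,x_N\})=-\sum_{i\ne j}\log\|x_i-x_j\|$. For a root $z$ of a degree-$N$ polynomial $P$, $\mu_{\rm norm}(P,z)=N^{1/2}\|P\|(1+|z|^2)^{N/2-1}/|P'(z)|$, where $\|\sum_{i=0}^N a_iz^i\|=(\sum_i\binom{N}{i}^{-1}|a_i|^2)^{1/2}$ is the Bombieri–Weyl norm. *)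

theory Defs
  imports "HOL-Analysis.Analysis" "HOL-Computational_Algebra.Polynomial"
begin

definition stereo :: "real^3 \<Rightarrow> complex" where
  "stereo x = Complex (x$1) (x$2) / complex_of_real (1 - x$3)"

definition log_energy :: "nat \<Rightarrow> (nat \<Rightarrow> real^3) \<Rightarrow> real" where
  "log_energy N x = - (\<Sum>i<N. \<Sum>j\<in>{..<N} - {i}. ln (norm (x i - x j)))"

definition bw_norm :: "nat \<Rightarrow> complex poly \<Rightarrow> real" where
  "bw_norm N P = sqrt (\<Sum>i\<le>N. (cmod (coeff P i))\<^sup>2 / real (N choose i))"

definition mu_norm :: "nat \<Rightarrow> complex poly \<Rightarrow> complex \<Rightarrow> real" where
  "mu_norm N P z = sqrt (real N) * bw_norm N P * (1 + (cmod z)\<^sup>2) powr (real N / 2 - 1)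
                    / cmod (poly (pderiv P) z)"

text \<open>Integral over the unit sphere with respect to the normalized surface measure
  (total mass 1), via spherical coordinates.\<close>
definition sphere_param :: "real \<Rightarrow> real \<Rightarrow> real^3" where
  "sphere_param \<theta> \<phi> = vector [sin \<theta> * cos \<phi>, sin \<theta> * sin \<phi>, cos \<theta>]"

definition sphere_integral :: "(real^3 \<Rightarrow> real) \<Rightarrow> real" where
  "sphere_integral f = integral (cbox (0, 0) (pi, 2 * pi))
       (\<lambda>(\<theta>, \<phi>). f (sphere_param \<theta> \<phi>) * sin \<theta>) / (4 * pi)"

end

theory Submission
  imports Defs
begin

lemma norm3_sq: "(norm (v::real^3))^2 = (v$1)^2 + (v$2)^2 + (v$3)^2"
  unfolding power2_norm_eq_inner by (simp add: inner_vec_def sum_3 power2_eq_square)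

lemma stereo_inv:
  assumes "norm x = 1" "x$3 \<noteq> 1" "stereo x = z"
  shows "1 + (cmod z)^2 = 2 / (1 - x$3)"
    and "x$1 = 2 * Re z / (1 + (cmod z)^2)"
    and "x$2 = 2 * Im z / (1 + (cmod z)^2)"
    and "x$3 = ((cmod z)^2 - 1) / (1 + (cmod z)^2)"
proof -
  have n: "(x$1)^2 + (x$2)^2 + (x$3)^2 = 1" using assms(1) norm3_sq[of x] by simp
  have d: "1 - x$3 \<noteq> 0" using assms(2) by simp
  have zz: "z * complex_of_real (1 - x$3) = Complex (x$1) (x$2)"
    using assms(3) d unfolding stereo_def by (auto simp: field_simps)
  have "Re (z * complex_of_real (1 - x$3)) = x$1" "Im (z * complex_of_real (1 - x$3)) = x$2"
    using zz by simp_all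
  hence "Re z * (1 - x$3) = x$1" "Im z * (1 - x$3) = x$2" by simp_all
  hence re: "Re z = x$1 / (1 - x$3)" and im: "Im z = x$2 / (1 - x$3)"
    using d by (simp_all add: field_simps)
  have "(cmod z)^2 = (x$1)^2/(1-x$3)^2 + (x$2)^2/(1-x$3)^2"
    by (simp add: cmod_power2 re im power_divide)
  also have "\<dots> = ((x$1)^2 + (x$2)^2) / (1-x$3)^2" by (simp add: add_divide_distrib)
  also have "(x$1)^2 + (x$2)^2 = (1 - x$3) * (1 + x$3)" using n by (simp add: algebra_simps power2_eq_square)
  also have "(1 - x$3) * (1 + x$3) / (1-x$3)^2 = (1 + x$3) / (1 - x$3)"
    using d by (simp add: power2_eq_square)
  finally have c: "(cmod z)^2 = (1 + x$3) / (1 - x$3)" .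
  show A: "1 + (cmod z)^2 = 2 / (1 - x$3)" using c d by (simp add: field_simps)
  show "x$1 = 2 * Re z / (1 + (cmod z)^2)" using A re d by simp
  show "x$2 = 2 * Im z / (1 + (cmod z)^2)" using A im d by simp
  have c': "(cmod z)^2 * (1 - x$3) = 1 + x$3" using c d by (simp add: field_simps)
  have pos: "1 + (cmod z)^2 > 0" by (simp add: add_pos_nonneg)
  have "x$3 * (1 + (cmod z)^2) = (cmod z)^2 - 1" using c' by (simp add: algebra_simps)
  then show "x$3 = ((cmod z)^2 - 1) / (1 + (cmod z)^2)" using pos by (simp add: eq_divide_eq)
qed

lemma unit_dist_sq:
  assumes "norm x = 1" "norm y = 1"
  shows "(norm (x - y))^2 = 2 - 2 * (x \<bullet> y)"
proof -
  have "x \<bullet> x = 1" "y \<bullet> y = 1" using assms by (simp_all add: power2_norm_eq_inner[symmetric])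
  thus ?thesis by (simp add: power2_norm_eq_inner inner_diff_left inner_diff_right inner_commute)
qed

lemma two_minus_div: "(c::real) \<noteq> 0 \<Longrightarrow> (2 - 2 * (N / c)) * c = 2 * c - 2 * N"
  by (simp add: algebra_simps)

lemma alg_pair: "2*(1+(a1^2+a2^2))*(1+(b1^2+b2^2)) - 2 * (4*a1*b1 + 4*a2*b2 + ((a1^2+a2^2) - 1) * ((b1^2+b2^2) - 1))
   = 4 * ((a1-b1)^2 + (a2-b2)^2)" for a1 a2 b1 b2 :: real
  by algebra

lemma alg_int: "a^2 + b^2 = 1 \<Longrightarrow> c1^2 + c2^2 = 1 \<Longrightarrow> 2*(1+(u1^2+u2^2)) - 2*(2*b*a*c1*2*u1 + 2*b*a*c2*2*u2 + (a^2-b^2)*((u1^2+u2^2)-1))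
   = 4 * ((a*c1 - b*u1)^2 + (a*c2 - b*u2)^2)" for a b c1 c2 u1 u2 :: real
  by algebra

lemma inner3: "(x::real^3) \<bullet> y = x$1*y$1 + x$2*y$2 + x$3*y$3"
  by (simp add: inner_vec_def sum_3)

lemma pair_dist:
  assumes "norm x = 1" "x$3 \<noteq> 1" "stereo x = z" "norm y = 1" "y$3 \<noteq> 1" "stereo y = w"
  shows "(norm (x - y))^2 * ((1 + (cmod z)^2) * (1 + (cmod w)^2)) = 4 * (cmod (z - w))^2"
proof -
  define A where "A = 1 + (cmod z)^2"
  define B where "B = 1 + (cmod w)^2"
  have A: "A > 0" "B > 0" unfolding A_def B_def by (simp_all add: add_pos_nonneg)
  note sx = stereo_inv[OF assms(1-3), folded A_def]
  note sy = stereo_inv[OF assms(4-6), folded B_def]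
  have "(norm (x - y))^2 * (A * B) = (2 - 2 * (x \<bullet> y)) * (A * B)"
    using unit_dist_sq[OF assms(1,4)] by simp
  also have "\<dots> = 2*A*B - 2 * (4 * Re z * Re w + 4 * Im z * Im w + ((cmod z)^2 - 1) * ((cmod w)^2 - 1))"
  proof -
    have "x \<bullet> y = (4 * Re z * Re w + 4 * Im z * Im w + ((cmod z)^2 - 1) * ((cmod w)^2 - 1)) / (A * B)"
      unfolding inner3 sx(2-4) sy(2-4) by (simp add: divide_simps)
    note h = this
    show ?thesis unfolding mult.assoc[of 2 A B] h using A by (intro two_minus_div) simp
  qed
  also have "\<dots> = 4 * (cmod (z - w))^2"
  proof -
    have e: "(cmod (z - w))^2 = (Re z - Re w)^2 + (Im z - Im w)^2" by (simp add: cmod_power2)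
    show ?thesis unfolding A_def B_def cmod_power2[of z] cmod_power2[of w] e
      by (rule alg_pair)
  qed
  finally show ?thesis unfolding A_def B_def .
qed

lemma sphere_param_norm: "norm (sphere_param t f) = 1"
proof -
  have "(norm (sphere_param t f))^2 = 1"
  proof -
    have "(sin t * cos f)^2 + (sin t * sin f)^2 + (cos t)^2 = (sin t)^2 * ((sin f)^2 + (cos f)^2) + (cos t)^2"
      by algebra
    also have "\<dots> = 1" by (simp only: sin_cos_squared_add mult_1_right)
    finally show ?thesis unfolding norm3_sq sphere_param_def vector_3 .
  qed
  thus ?thesis by (smt (verit) norm_ge_zero power2_eq_1_iff)
qed

lemma integrand_factor:
  assumes "norm x = 1" "x$3 \<noteq> 1" "stereo x = z"
  shows "(norm (sphere_param t f - x))^2 * (1 + (cmod z)^2)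
     = 4 * (cmod (complex_of_real (cos (t/2)) * cis f - complex_of_real (sin (t/2)) * z))^2"
proof -
  define A where "A = 1 + (cmod z)^2"
  have A: "A > 0" unfolding A_def by (simp_all add: add_pos_nonneg)
  note sx = stereo_inv[OF assms(1-3), folded A_def]
  define a where "a = cos (t/2)"
  define b where "b = sin (t/2)"
  have st: "sin t = 2 * b * a" unfolding a_def b_def using sin_double[of "t/2"] by simp
  have ct: "cos t = a^2 - b^2" unfolding a_def b_def using cos_double[of "t/2"] by simp
  have ab: "a^2 + b^2 = 1" unfolding a_def b_def by simp
  have "(norm (sphere_param t f - x))^2 * A = (2 - 2 * (sphere_param t f \<bullet> x)) * A"
    using unit_dist_sq[OF sphere_param_norm assms(1)] by simp
  also have "\<dots> = 2 * A - 2 * (sin t * cos f * 2 * Re z + sin t * sin f * 2 * Im z + cos t * ((cmod z)^2 - 1))"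
  proof -
    have "sphere_param t f \<bullet> x = (sin t * cos f * 2 * Re z + sin t * sin f * 2 * Im z + cos t * ((cmod z)^2 - 1)) / A"
      unfolding inner3 sx(2-4) sphere_param_def by (simp add: divide_simps)
    note h = this
    show ?thesis unfolding h using A by (intro two_minus_div) simp
  qed
  also have "\<dots> = 4 * ((a * cos f - b * Re z)^2 + (a * sin f - b * Im z)^2)"
    unfolding st ct A_def cmod_power2 using alg_int[OF ab, of "cos f" "sin f" "Re z" "Im z"] by simp
  also have "\<dots> = 4 * (cmod (complex_of_real a * cis f - complex_of_real b * z))^2"
    unfolding cmod_power2 by (simp add: cis.sel)
  finally show ?thesis unfolding A_def a_def b_def .
qed

lemma cos_int_integral:
  "((\<lambda>t. cos (of_int m * t)) has_integral (if m = 0 then 2*pi else 0)) {0..2*pi}"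
proof (cases "m = 0")
  case True
  then show ?thesis using has_integral_const_real[of "1::real" 0 "2*pi"] by simp
next
  case False
  have "((\<lambda>t. cos (of_int m * t)) has_integral ((\<lambda>t. sin (of_int m * t) / of_int m) (2*pi) - (\<lambda>t. sin (of_int m * t) / of_int m) 0)) {0..2*pi}"
  proof (rule fundamental_theorem_of_calculus)
    fix t :: real
    have "((\<lambda>t. sin (of_int m * t) / of_int m) has_real_derivative cos (of_int m * t)) (at t within {0..2*pi})"
      using False by (auto intro!: derivative_eq_intros)
    then show "((\<lambda>t. sin (of_int m * t) / of_int m) has_vector_derivative cos (of_int m * t)) (at t within {0..2*pi})"
      by (simp add: has_real_derivative_iff_has_vector_derivative)
  qed simp
  moreover have "sin (of_int m * (2*pi)) = 0" using sin_int_2pin[of m] by (simp add: mult.commute)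
  ultimately show ?thesis using False by simp
qed

lemma sin_int_integral:
  "((\<lambda>t. sin (of_int m * t)) has_integral 0) {0..2*pi}"
proof (cases "m = 0")
  case True
  then show ?thesis by simp
next
  case False
  have "((\<lambda>t. sin (of_int m * t)) has_integral ((\<lambda>t. - cos (of_int m * t) / of_int m) (2*pi) - (\<lambda>t. - cos (of_int m * t) / of_int m) 0)) {0..2*pi}"
  proof (rule fundamental_theorem_of_calculus)
    fix t :: real
    have "((\<lambda>t. - cos (of_int m * t) / of_int m) has_real_derivative sin (of_int m * t)) (at t within {0..2*pi})"
      using False by (auto intro!: derivative_eq_intros)
    then show "((\<lambda>t. - cos (of_int m * t) / of_int m) has_vector_derivative sin (of_int m * t)) (at t within {0..2*pi})"
      by (simp add: has_real_derivative_iff_has_vector_derivative)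
  qed simp
  moreover have "cos (of_int m * (2*pi)) = 1" using cos_int_2pin[of m] by (simp add: mult.commute)
  ultimately show ?thesis using False by simp
qed

lemma cmod_sq_expand:
  fixes d :: "nat \<Rightarrow> complex"
  shows "(cmod (\<Sum>k\<le>N. d k * cis (real k * t)))^2 =
    (\<Sum>k\<le>N. \<Sum>l\<le>N. Re (d k * cnj (d l)) * cos (of_int (int k - int l) * t)
                     - Im (d k * cnj (d l)) * sin (of_int (int k - int l) * t))"
proof -
  define S where "S = (\<Sum>k\<le>N. d k * cis (real k * t))"
  have "(cmod S)^2 = Re (S * cnj S)" unfolding cmod_power2 by (simp add: power2_eq_square)
  also have "S * cnj S = (\<Sum>k\<le>N. \<Sum>l\<le>N. (d k * cnj (d l)) * cis (of_int (int k - int l) * t))"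
  proof -
    have "S * cnj S = (\<Sum>k\<le>N. d k * cis (real k * t)) * (\<Sum>l\<le>N. cnj (d l) * cis (- (real l * t)))"
      unfolding S_def by (simp add: cis_cnj)
    also have "\<dots> = (\<Sum>k\<le>N. \<Sum>l\<le>N. (d k * cis (real k * t)) * (cnj (d l) * cis (- (real l * t))))"
      by (simp add: sum_product)
    also have "\<dots> = (\<Sum>k\<le>N. \<Sum>l\<le>N. (d k * cnj (d l)) * cis (of_int (int k - int l) * t))"
    proof (intro sum.cong refl)
      fix k l
      have "(d k * cis (real k * t)) * (cnj (d l) * cis (- (real l * t)))
          = (d k * cnj (d l)) * (cis (real k * t) * cis (- (real l * t)))" by (simp add: ac_simps)
      also have "cis (real k * t) * cis (- (real l * t)) = cis (of_int (int k - int l) * t)"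
        by (simp add: cis_mult algebra_simps)
      finally show "(d k * cis (real k * t)) * (cnj (d l) * cis (- (real l * t)))
          = (d k * cnj (d l)) * cis (of_int (int k - int l) * t)" .
    qed
    finally show ?thesis .
  qed
  finally show ?thesis unfolding S_def by (simp add: Re_sum)
qed

lemma phi_integral:
  fixes d :: "nat \<Rightarrow> complex"
  shows "((\<lambda>t. (cmod (\<Sum>k\<le>N. d k * cis (real k * t)))^2) has_integral (2*pi*(\<Sum>k\<le>N. (cmod (d k))^2))) {0..2*pi}"
proof -
  have "((\<lambda>t. \<Sum>k\<le>N. \<Sum>l\<le>N. Re (d k * cnj (d l)) * cos (of_int (int k - int l) * t)
                     - Im (d k * cnj (d l)) * sin (of_int (int k - int l) * t))
     has_integral (\<Sum>k\<le>N. \<Sum>l\<le>N. Re (d k * cnj (d l)) * (if int k - int l = 0 then 2*pi else 0) - Im (d k * cnj (d l)) * 0)) {0..2*pi}"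
    by (intro has_integral_sum finite_atMost has_integral_diff has_integral_mult_right
          cos_int_integral sin_int_integral)
  also have "(\<Sum>k\<le>N. \<Sum>l\<le>N. Re (d k * cnj (d l)) * (if int k - int l = 0 then 2*pi else 0) - Im (d k * cnj (d l)) * 0)
     = (\<Sum>k\<le>N. Re (d k * cnj (d k)) * (2*pi))"
  proof (intro sum.cong refl)
    fix k assume k: "k \<in> {..N}"
    have "(\<Sum>l\<le>N. Re (d k * cnj (d l)) * (if int k - int l = 0 then 2*pi else 0) - Im (d k * cnj (d l)) * 0)
       = (\<Sum>l\<le>N. if l = k then Re (d k * cnj (d l)) * (2*pi) else 0)"
      by (intro sum.cong refl) auto
    also have "\<dots> = Re (d k * cnj (d k)) * (2*pi)" using k by simp
    finally show "(\<Sum>l\<le>N. Re (d k * cnj (d l)) * (if int k - int l = 0 then 2*pi else 0) - Im (d k * cnj (d l)) * 0)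
       = Re (d k * cnj (d k)) * (2*pi)" .
  qed
  also have "\<dots> = 2*pi*(\<Sum>k\<le>N. (cmod (d k))^2)"
    unfolding cmod_power2 by (simp add: sum_distrib_left power2_eq_square algebra_simps)
  finally show ?thesis unfolding cmod_sq_expand .
qed

lemma beta_poly:
  "((\<lambda>t. (1-t)^k * t^m) has_integral (fact k * fact m / fact (k+m+1))) {0..1::real}"
proof -
  have B: "((\<lambda>t. t powr (real m + 1 - 1) * (1 - t) powr (real k + 1 - 1)) has_integral Beta (real m + 1) (real k + 1)) {0..1}"
    by (rule has_integral_Beta_real) auto
  have "Beta (real m + 1) (real k + 1) = fact m * fact k / fact (k+m+1)"
  proof -
    have g1: "Gamma (real m + 1) = fact m" using Gamma_fact[of m, where 'a=real] by (simp add: add.commute)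
    have g2: "Gamma (real k + 1) = fact k" using Gamma_fact[of k, where 'a=real] by (simp add: add.commute)
    have "real m + 1 + (real k + 1) = 1 + real (k+m+1)" by simp
    then have g3: "Gamma (real m + 1 + (real k + 1)) = fact (k+m+1)"
      using Gamma_fact[of "k+m+1", where 'a=real] by metis
    show ?thesis unfolding Beta_def g1 g2 g3 ..
  qed
  then have B': "((\<lambda>t. t powr (real m + 1 - 1) * (1 - t) powr (real k + 1 - 1)) has_integral (fact k * fact m / fact (k+m+1))) {0..1}"
    using B by (simp add: mult.commute)
  show ?thesis
  proof (subst has_integral_spike_finite_eq[of "{0,1}"])
    show "finite {0::real,1}" by simp
    fix t :: real assume "t \<in> {0..1} - {0,1}"
    then have "0 < t" "0 < 1 - t" by auto
    then show "t powr (real m + 1 - 1) * (1 - t) powr (real k + 1 - 1) = (1-t)^k * t^m"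
      by (simp add: powr_realpow)
  qed (rule B')
qed

lemma theta_integral:
  "((\<lambda>t. (cos (t/2)^2)^k * (sin (t/2)^2)^m * sin t) has_integral (2 * (fact k * fact m / fact (k+m+1)))) {0..pi}"
proof -
  define f where "f = (\<lambda>t::real. (1-t)^k * t^m)"
  define g where "g = (\<lambda>t::real. (1 - cos t)/2)"
  have "((\<lambda>t. (sin t / 2) *\<^sub>R f (g t)) has_integral (integral {g 0..g pi} f)) {0..pi}"
  proof (rule has_integral_substitution[where c=0 and d=1])
    show "0 \<le> pi" by simp
    show "g 0 \<le> g pi" unfolding g_def by simp
    show "g ` {0..pi} \<subseteq> {0..1}" unfolding g_def by (auto simp: abs_le_iff)
    show "continuous_on {0..1} f" unfolding f_def by (intro continuous_intros)
    fix t assume "t \<in> {0..pi}"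
    show "(g has_real_derivative sin t / 2) (at t within {0..pi})"
      unfolding g_def by (auto intro!: derivative_eq_intros)
  qed
  moreover have "integral {g 0..g pi} f = fact k * fact m / fact (k+m+1)"
    unfolding g_def f_def using beta_poly[of k m] by (simp add: integral_unique)
  ultimately have h: "((\<lambda>t. (sin t / 2) *\<^sub>R f (g t)) has_integral (fact k * fact m / fact (k+m+1))) {0..pi}"
    by simp
  have eq: "2 * ((sin t / 2) *\<^sub>R f (g t)) = (cos (t/2)^2)^k * (sin (t/2)^2)^m * sin t" for t
  proof -
    have c: "cos t = 2 * cos (t/2)^2 - 1" using cos_double_cos[of "t/2"] by simp
    have s: "cos t = 1 - 2 * sin (t/2)^2" using cos_double_sin[of "t/2"] by simp
    have "1 - g t = cos (t/2)^2" unfolding g_def using c by (simp add: field_simps)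
    moreover have "g t = sin (t/2)^2" unfolding g_def using s by simp
    ultimately show ?thesis unfolding f_def by simp
  qed
  show ?thesis using has_integral_mult_right[OF h, of 2] unfolding eq .
qed

lemma P_degree: fixes z :: "nat \<Rightarrow> complex" shows "degree (\<Prod>j<N. [:- z j, 1:]) = N"
  by (subst degree_prod_sum_eq) auto

lemma P_coeffN: fixes z :: "nat \<Rightarrow> complex" shows "coeff (\<Prod>j<N. [:- z j, 1:]) N = (1::complex)"
proof -
  have "coeff (\<Prod>j<N. [:- z j, 1:]) N = lead_coeff (\<Prod>j<N. [:- z j, 1:])" by (simp add: P_degree)
  also have "\<dots> = 1" by (simp add: lead_coeff_prod)
  finally show ?thesis .
qed

lemma P_poly: fixes z :: "nat \<Rightarrow> complex" shows "poly (\<Prod>j<N. [:- z j, 1:]) w = (\<Prod>j<N. w - z j)"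
  by (simp add: poly_prod)

lemma homog:
  fixes s t :: complex and z :: "nat \<Rightarrow> complex"
  shows "(\<Prod>j<N. s - t * z j) = (\<Sum>k\<le>N. coeff (\<Prod>j<N. [:- z j, 1:]) k * s^k * t^(N-k))"
proof (cases "t = 0")
  case True
  have "(\<Sum>k\<le>N. coeff (\<Prod>j<N. [:- z j, 1:]) k * s^k * t^(N-k))
      = (\<Sum>k\<le>N. if k = N then s^N else 0)"
    using True by (intro sum.cong refl) (auto simp: P_coeffN)
  then show ?thesis using True by simp
next
  case False
  have "(\<Prod>j<N. s - t * z j) = (\<Prod>j<N. t * (s/t - z j))"
    using False by (intro prod.cong refl) (simp add: field_simps)
  also have "\<dots> = t^N * (\<Prod>j<N. s/t - z j)" by (simp add: prod.distrib)
  also have "(\<Prod>j<N. s/t - z j) = poly (\<Prod>j<N. [:- z j, 1:]) (s/t)" by (simp add: P_poly)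
  also have "\<dots> = (\<Sum>k\<le>N. coeff (\<Prod>j<N. [:- z j, 1:]) k * (s/t)^k)"
    by (simp add: poly_altdef P_degree)
  also have "t^N * \<dots> = (\<Sum>k\<le>N. coeff (\<Prod>j<N. [:- z j, 1:]) k * s^k * t^(N-k))"
    unfolding sum_distrib_left
  proof (intro sum.cong refl)
    fix k assume "k \<in> {..N}"
    then have "t^N = t^k * t^(N-k)" by (simp add: power_add[symmetric])
    then show "t^N * (coeff (\<Prod>j<N. [:- z j, 1:]) k * (s/t)^k) = coeff (\<Prod>j<N. [:- z j, 1:]) k * s^k * t^(N-k)"
      using False by (simp add: power_divide field_simps)
  qed
  finally show ?thesis .
qed

lemma P_deriv:
  fixes z :: "nat \<Rightarrow> complex"
  assumes "i < N"
  shows "poly (pderiv (\<Prod>j<N. [:- z j, 1:])) (z i) = (\<Prod>j\<in>{..<N}-{i}. z i - z j)"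
proof -
  have "poly (pderiv (\<Prod>j<N. [:- z j, 1:])) (z i) = (\<Sum>a<N. \<Prod>j\<in>{..<N}-{a}. z i - z j)"
    by (simp add: pderiv_prod poly_sum poly_prod pderiv_pCons)
  also have "\<dots> = (\<Sum>a<N. if a = i then (\<Prod>j\<in>{..<N}-{i}. z i - z j) else 0)"
  proof (intro sum.cong refl)
    fix a assume a: "a \<in> {..<N}"
    show "(\<Prod>j\<in>{..<N}-{a}. z i - z j) = (if a = i then (\<Prod>j\<in>{..<N}-{i}. z i - z j) else 0)"
    proof (cases "a = i")
      case False
      then have "i \<in> {..<N}-{a}" using assms by auto
      then have "(\<Prod>j\<in>{..<N}-{a}. z i - z j) = 0" by (intro prod_zero) auto
      then show ?thesis using False by simp
    qed simp
  qed
  also have "\<dots> = (\<Prod>j\<in>{..<N}-{i}. z i - z j)" using assms by simp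
  finally show ?thesis .
qed

lemma integrand_rewrite:
  fixes z :: "nat \<Rightarrow> complex" and x :: "nat \<Rightarrow> real^3"
  assumes "\<And>i. i < N \<Longrightarrow> norm (x i) = 1"
    and "\<And>i. i < N \<Longrightarrow> x i $ 3 \<noteq> 1"
    and "\<And>i. i < N \<Longrightarrow> stereo (x i) = z i"
  shows "(\<Prod>j<N. (norm (sphere_param t f - x j))\<^sup>2)
    = 4^N / (\<Prod>j<N. 1 + (cmod (z j))^2) *
      (cmod (\<Sum>k\<le>N. (coeff (\<Prod>j<N. [:- z j, 1:]) k * complex_of_real (cos (t/2)^k * sin (t/2)^(N-k))) * cis (real k * f)))^2"
proof -
  define a where "a = complex_of_real (cos (t/2))"
  define b where "b = complex_of_real (sin (t/2))"
  have pos: "(\<Prod>j<N. 1 + (cmod (z j))^2) > 0" by (intro prod_pos) (simp add: add_pos_nonneg)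
  have "(\<Prod>j<N. (norm (sphere_param t f - x j))\<^sup>2)
      = (\<Prod>j<N. 4 * (cmod (a * cis f - b * z j))^2 / (1 + (cmod (z j))^2))"
  proof (intro prod.cong refl)
    fix j assume "j \<in> {..<N}"
    then have j: "j < N" by simp
    have A: "1 + (cmod (z j))^2 > 0" by (simp add: add_pos_nonneg)
    show "(norm (sphere_param t f - x j))\<^sup>2 = 4 * (cmod (a * cis f - b * z j))^2 / (1 + (cmod (z j))^2)"
      using integrand_factor[OF assms(1-3)[OF j], of t f] A unfolding a_def b_def
      by (simp add: eq_divide_eq)
  qed
  also have "\<dots> = 4^N / (\<Prod>j<N. 1 + (cmod (z j))^2) * (cmod (\<Prod>j<N. a * cis f - b * z j))^2"
    by (simp add: prod_dividef prod.distrib prod_norm[symmetric] power_mult_distrib[symmetric] prod_power_distrib)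
  also have "(\<Prod>j<N. a * cis f - b * z j) = (\<Sum>k\<le>N. coeff (\<Prod>j<N. [:- z j, 1:]) k * (a * cis f)^k * b^(N-k))"
    by (rule homog)
  also have "\<dots> = (\<Sum>k\<le>N. (coeff (\<Prod>j<N. [:- z j, 1:]) k * complex_of_real (cos (t/2)^k * sin (t/2)^(N-k))) * cis (real k * f))"
  proof (intro sum.cong refl)
    fix k assume "k \<in> {..N}"
    have dm: "(a * cis f)^k = a^k * cis (real k * f)" by (metis Complex.DeMoivre power_mult_distrib)
    show "coeff (\<Prod>j<N. [:- z j, 1:]) k * (a * cis f)^k * b^(N-k)
       = (coeff (\<Prod>j<N. [:- z j, 1:]) k * complex_of_real (cos (t/2)^k * sin (t/2)^(N-k))) * cis (real k * f)"
    proof -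
      have ab: "a^k * b^(N-k) = complex_of_real (cos (t/2)^k * sin (t/2)^(N-k))" by (simp add: a_def b_def)
      have gen: "\<And>c p q r :: complex. c * (p * q) * r = (c * (p * r)) * q" by (simp add: ac_simps)
      show ?thesis unfolding dm by (subst gen, subst ab, rule refl)
    qed
  qed
  finally show ?thesis .
qed

lemma fact_ratio:
  assumes "k \<le> N"
  shows "fact k * fact (N-k) / fact (k + (N-k) + 1) = 1 / ((real N + 1) * real (N choose k))"
proof -
  have "k + (N-k) + 1 = Suc N" using assms by simp
  then have f1: "(fact (k + (N-k) + 1) :: real) = (real N + 1) * fact N" by (simp add: algebra_simps)
  have "real (N choose k) = fact N / (fact k * fact (N-k))" using binomial_fact[OF assms] by simp
  then have f2: "(fact N :: real) = fact k * fact (N-k) * real (N choose k)" by (simp add: field_simps)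
  have p: "(fact k :: real) * fact (N-k) \<noteq> 0" by simp
  have "fact k * fact (N-k) / fact (k + (N-k) + 1) = (fact k * fact (N-k)) / ((fact k * fact (N-k)) * ((real N + 1) * real (N choose k)))"
    unfolding f1 f2 by (simp add: ac_simps)
  also have "\<dots> = 1 / ((real N + 1) * real (N choose k))" using p by simp
  finally show ?thesis .
qed

lemma sphere_int:
  fixes z :: "nat \<Rightarrow> complex" and x :: "nat \<Rightarrow> real^3"
  assumes a1: "\<And>i. i < N \<Longrightarrow> norm (x i) = 1"
    and a2: "\<And>i. i < N \<Longrightarrow> x i $ 3 \<noteq> 1"
    and a3: "\<And>i. i < N \<Longrightarrow> stereo (x i) = z i"
  shows "sphere_integral (\<lambda>p. \<Prod>j<N. (norm (p - x j))\<^sup>2)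
     = 4^N / (\<Prod>j<N. 1 + (cmod (z j))^2) * (\<Sum>k\<le>N. (cmod (coeff (\<Prod>j<N. [:- z j, 1:]) k))^2 / real (N choose k)) / (real N + 1)"
proof -
  define K where "K = 4^N / (\<Prod>j<N. 1 + (cmod (z j))^2)"
  define c where "c = (\<lambda>k. coeff (\<Prod>j<N. [:- z j, 1:]) k)"
  define d where "d = (\<lambda>t k. c k * complex_of_real (cos (t/2)^k * sin (t/2)^(N-k)))"
  define H where "H = (\<lambda>p::real\<times>real. K * (cmod (\<Sum>k\<le>N. d (fst p) k * cis (real k * snd p)))^2 * sin (fst p))"
  have 1: "integral (cbox (0, 0) (pi, 2 * pi)) (\<lambda>(t, f). (\<Prod>j<N. (norm (sphere_param t f - x j))\<^sup>2) * sin t)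
      = integral (cbox (0, 0) (pi, 2 * pi)) H"
    by (intro integral_cong) (auto simp: H_def K_def d_def c_def integrand_rewrite[OF a1 a2 a3])
  have cont: "continuous_on (cbox (0, 0) (pi, 2 * pi)) H"
    unfolding H_def d_def by (intro continuous_intros) auto
  have 2: "integral (cbox (0, 0) (pi, 2 * pi)) H = integral (cbox 0 pi) (\<lambda>t. integral (cbox 0 (2*pi)) (\<lambda>f. H (t, f)))"
    by (rule integral_prod_continuous[OF cont])
  have inner: "integral (cbox 0 (2*pi)) (\<lambda>f. H (t, f))
     = (\<Sum>k\<le>N. (K * 2 * pi * (cmod (c k))^2) * ((cos (t/2)^2)^k * (sin (t/2)^2)^(N-k) * sin t))" for t
  proof -
    have "((\<lambda>f. (K * sin t) * (cmod (\<Sum>k\<le>N. d t k * cis (real k * f)))^2) has_integral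
         (K * sin t) * (2*pi*(\<Sum>k\<le>N. (cmod (d t k))^2))) {0..2*pi}"
      by (intro has_integral_mult_right phi_integral)
    moreover have "(\<lambda>f. (K * sin t) * (cmod (\<Sum>k\<le>N. d t k * cis (real k * f)))^2) = (\<lambda>f. H (t, f))"
      unfolding H_def by (simp add: ac_simps)
    moreover have "(K * sin t) * (2*pi*(\<Sum>k\<le>N. (cmod (d t k))^2))
        = (\<Sum>k\<le>N. (K * 2 * pi * (cmod (c k))^2) * ((cos (t/2)^2)^k * (sin (t/2)^2)^(N-k) * sin t))"
    proof -
      have "(cmod (d t k))^2 = (cmod (c k))^2 * ((cos (t/2)^2)^k * (sin (t/2)^2)^(N-k))" for k
        unfolding d_def norm_mult norm_of_real
        by (simp add: power_mult_distrib power_abs power_mult[symmetric] mult.commute)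
      then show ?thesis by (simp add: sum_distrib_left ac_simps)
    qed
    ultimately show ?thesis by (simp add: integral_unique)
  qed
  have outer: "((\<lambda>t. \<Sum>k\<le>N. (K * 2 * pi * (cmod (c k))^2) * ((cos (t/2)^2)^k * (sin (t/2)^2)^(N-k) * sin t))
      has_integral (\<Sum>k\<le>N. (K * 2 * pi * (cmod (c k))^2) * (2 * (fact k * fact (N-k) / fact (k + (N-k) + 1))))) {0..pi}"
    by (intro has_integral_sum finite_atMost has_integral_mult_right theta_integral)
  have val: "(\<Sum>k\<le>N. (K * 2 * pi * (cmod (c k))^2) * (2 * (fact k * fact (N-k) / fact (k + (N-k) + 1))))
     = 4 * pi * (K * (\<Sum>k\<le>N. (cmod (c k))^2 / real (N choose k)) / (real N + 1))"
  proof -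
    have "(\<Sum>k\<le>N. (K * 2 * pi * (cmod (c k))^2) * (2 * (fact k * fact (N-k) / fact (k + (N-k) + 1))))
       = (\<Sum>k\<le>N. (4 * pi * K / (real N + 1)) * ((cmod (c k))^2 / real (N choose k)))"
    proof (intro sum.cong refl)
      fix k assume "k \<in> {..N}"
      then have kN: "k \<le> N" by simp
      show "(K * 2 * pi * (cmod (c k))^2) * (2 * (fact k * fact (N-k) / fact (k + (N-k) + 1)))
         = (4 * pi * K / (real N + 1)) * ((cmod (c k))^2 / real (N choose k))"
        unfolding fact_ratio[OF kN] by (simp add: field_simps)
    qed
    also have "\<dots> = (4 * pi * K / (real N + 1)) * (\<Sum>k\<le>N. (cmod (c k))^2 / real (N choose k))"
      by (rule sum_distrib_left[symmetric])
    also have "\<dots> = 4 * pi * (K * (\<Sum>k\<le>N. (cmod (c k))^2 / real (N choose k)) / (real N + 1))"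
      by simp
    finally show ?thesis .
  qed
  have "integral (cbox (0, 0) (pi, 2 * pi)) (\<lambda>(t, f). (\<Prod>j<N. (norm (sphere_param t f - x j))\<^sup>2) * sin t)
     = 4 * pi * (K * (\<Sum>k\<le>N. (cmod (c k))^2 / real (N choose k)) / (real N + 1))"
    unfolding 1 2 inner using outer val by (simp add: integral_unique)
  then show ?thesis unfolding sphere_integral_def K_def c_def by simp
qed

lemma ln4: "ln (4::real) = 2 * ln 2"
  using ln_realpow[of 2 2] by simp

lemma pair_ln:
  assumes "norm x = 1" "x$3 \<noteq> 1" "stereo x = z" "norm y = 1" "y$3 \<noteq> 1" "stereo y = w" "z \<noteq> w"
  shows "ln (norm (x - y)) = ln 2 + ln (cmod (z - w)) - ln (1 + (cmod z)^2) / 2 - ln (1 + (cmod w)^2) / 2"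
proof -
  have e: "(norm (x - y))^2 * ((1 + (cmod z)^2) * (1 + (cmod w)^2)) = 4 * (cmod (z - w))^2"
    by (rule pair_dist[OF assms(1-6)])
  have A: "1 + (cmod z)^2 > 0" "1 + (cmod w)^2 > 0" by (simp_all add: add_pos_nonneg)
  have c: "cmod (z - w) \<noteq> 0" using assms(7) by simp
  have n: "norm (x - y) \<noteq> 0"
  proof
    assume "norm (x - y) = 0"
    then show False using e c by simp
  qed
  have "ln ((norm (x - y))^2 * ((1 + (cmod z)^2) * (1 + (cmod w)^2))) = ln (4 * (cmod (z - w))^2)"
    using e by simp
  then have "2 * ln (norm (x - y)) + (ln (1 + (cmod z)^2) + ln (1 + (cmod w)^2)) = 2 * ln 2 + 2 * ln (cmod (z - w))"
    using A c n by (simp add: ln_mult ln_realpow ln4)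
  then show ?thesis by simp
qed

lemma energy_formula:
  fixes z :: "nat \<Rightarrow> complex" and x :: "nat \<Rightarrow> real^3"
  assumes inj: "inj_on z {..<N}"
    and a1: "\<And>i. i < N \<Longrightarrow> norm (x i) = 1"
    and a2: "\<And>i. i < N \<Longrightarrow> x i $ 3 \<noteq> 1"
    and a3: "\<And>i. i < N \<Longrightarrow> stereo (x i) = z i"
    and N: "N \<ge> 1"
  shows "log_energy N x = - (real N * (real N - 1) * ln 2
      + (\<Sum>i<N. ln (cmod (poly (pderiv (\<Prod>j<N. [:- z j, 1:])) (z i))))
      - (real N - 1) * (\<Sum>i<N. ln (1 + (cmod (z i))^2)))"
proof -
  define la where "la = (\<lambda>i. ln (1 + (cmod (z i))^2))"
  define L where "L = (\<Sum>i<N. la i)"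
  define lP where "lP = (\<lambda>i. ln (cmod (poly (pderiv (\<Prod>j<N. [:- z j, 1:])) (z i))))"
  have inner: "(\<Sum>j\<in>{..<N}-{i}. ln (norm (x i - x j))) = (real N - 1) * (ln 2 - la i / 2) + lP i - (L - la i) / 2"
    if i: "i < N" for i
  proof -
    have "(\<Sum>j\<in>{..<N}-{i}. ln (norm (x i - x j))) = (\<Sum>j\<in>{..<N}-{i}. (ln 2 - la i / 2) + ln (cmod (z i - z j)) - la j / 2)"
    proof (intro sum.cong refl)
      fix j assume j: "j \<in> {..<N}-{i}"
      then have "z i \<noteq> z j" using inj i by (auto dest: inj_onD)
      then show "ln (norm (x i - x j)) = (ln 2 - la i / 2) + ln (cmod (z i - z j)) - la j / 2"
        using pair_ln[OF a1 a2 a3 a1 a2 a3, of i j] i j unfolding la_def by auto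
    qed
    also have "\<dots> = real (card ({..<N}-{i})) * (ln 2 - la i / 2) + (\<Sum>j\<in>{..<N}-{i}. ln (cmod (z i - z j))) - (\<Sum>j\<in>{..<N}-{i}. la j) / 2"
      by (simp add: sum.distrib sum_subtractf sum_divide_distrib)
    also have "real (card ({..<N}-{i})) = real N - 1" using i N by simp
    also have "(\<Sum>j\<in>{..<N}-{i}. ln (cmod (z i - z j))) = lP i"
    proof -
      have "(\<Sum>j\<in>{..<N}-{i}. ln (cmod (z i - z j))) = ln (\<Prod>j\<in>{..<N}-{i}. cmod (z i - z j))"
        using inj i by (intro ln_prod[symmetric]) (auto dest: inj_onD)
      also have "\<dots> = lP i" unfolding lP_def P_deriv[OF i] prod_norm ..
      finally show ?thesis .
    qed
    also have "(\<Sum>j\<in>{..<N}-{i}. la j) = L - la i" unfolding L_def using i by (simp add: sum_diff1)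
    finally show ?thesis .
  qed
  have "log_energy N x = - (\<Sum>i<N. (real N - 1) * (ln 2 - la i / 2) + lP i - (L - la i) / 2)"
    unfolding log_energy_def using inner by simp
  also have "(\<Sum>i<N. (real N - 1) * (ln 2 - la i / 2) + lP i - (L - la i) / 2)
     = (real N - 1) * (real N * ln 2 - L / 2) + (\<Sum>i<N. lP i) - (real N * L - L) / 2"
  proof -
    have s1: "(\<Sum>i<N. (real N - 1) * (ln 2 - la i / 2)) = (real N - 1) * (real N * ln 2 - L / 2)"
      unfolding L_def sum_distrib_left[symmetric] by (simp add: sum_subtractf sum_divide_distrib)
    have s2: "(\<Sum>i<N. (L - la i) / 2) = (real N * L - L) / 2"
      unfolding sum_divide_distrib[symmetric] by (simp add: sum_subtractf L_def)
    show ?thesis unfolding sum_subtractf sum.distrib s1 s2 ..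
  qed
  finally show ?thesis unfolding L_def[symmetric] lP_def[symmetric] la_def[symmetric]
    by (simp add: algebra_simps)
qed

lemma bw_S_pos:
  fixes z :: "nat \<Rightarrow> complex"
  shows "(\<Sum>k\<le>N. (cmod (coeff (\<Prod>j<N. [:- z j, 1:]) k))^2 / real (N choose k)) \<ge> 1"
proof -
  have "(\<lambda>k. (cmod (coeff (\<Prod>j<N. [:- z j, 1:]) k))^2 / real (N choose k)) N = 1"
    by (simp add: P_coeffN)
  moreover have "(\<lambda>k. (cmod (coeff (\<Prod>j<N. [:- z j, 1:]) k))^2 / real (N choose k)) N
      \<le> (\<Sum>k\<le>N. (cmod (coeff (\<Prod>j<N. [:- z j, 1:]) k))^2 / real (N choose k))"
    by (rule member_le_sum) auto
  ultimately show ?thesis by simp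
qed

lemma mu_ln:
  fixes z :: "nat \<Rightarrow> complex"
  assumes inj: "inj_on z {..<N}" and i: "i < N"
  shows "ln (mu_norm N (\<Prod>j<N. [:- z j, 1:]) (z i))
    = ln (real N) / 2 + ln (\<Sum>k\<le>N. (cmod (coeff (\<Prod>j<N. [:- z j, 1:]) k))^2 / real (N choose k)) / 2
      + (real N / 2 - 1) * ln (1 + (cmod (z i))^2)
      - ln (cmod (poly (pderiv (\<Prod>j<N. [:- z j, 1:])) (z i)))"
proof -
  define S where "S = (\<Sum>k\<le>N. (cmod (coeff (\<Prod>j<N. [:- z j, 1:]) k))^2 / real (N choose k))"
  have S: "S > 0" using bw_S_pos[of z N] unfolding S_def by simp
  have A: "1 + (cmod (z i))^2 > 0" by (simp add: add_pos_nonneg)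
  have Nz: "real N > 0" using i by simp
  have Pd: "cmod (poly (pderiv (\<Prod>j<N. [:- z j, 1:])) (z i)) \<noteq> 0"
    unfolding P_deriv[OF i] using inj i by (auto dest: inj_onD)
  have "mu_norm N (\<Prod>j<N. [:- z j, 1:]) (z i) = sqrt (real N) * sqrt S * (1 + (cmod (z i))^2) powr (real N / 2 - 1)
       / cmod (poly (pderiv (\<Prod>j<N. [:- z j, 1:])) (z i))"
    unfolding mu_norm_def bw_norm_def S_def ..
  moreover have "(1 + (cmod (z i))^2) powr (real N / 2 - 1) > 0" using A by simp
  ultimately show ?thesis using S A Nz Pd unfolding S_def[symmetric]
    by (simp add: ln_div ln_mult ln_sqrt)
qed

theorem lemma3p3:
  fixes N :: nat and z :: "nat \<Rightarrow> complex" and x :: "nat \<Rightarrow> real^3"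
  assumes "inj_on z {..<N}"
    and "\<And>i. i < N \<Longrightarrow> x i \<in> sphere 0 1"
    and "\<And>i. i < N \<Longrightarrow> x i $ 3 \<noteq> 1"
    and "\<And>i. i < N \<Longrightarrow> stereo (x i) = z i"
  shows "log_energy N x
           - (\<Sum>i<N. ln (mu_norm N (\<Prod>j<N. [:- z j, 1:]) (z i)))
         = - real N * ln (sqrt (real N * (real N + 1)) / 2)
           - real N * ln (sqrt (sphere_integral (\<lambda>p. \<Prod>j<N. (norm (p - x j))\<^sup>2)))"
proof (cases "N = 0")
  case True
  then show ?thesis by (simp add: log_energy_def)
next
  case False
  then have N: "N \<ge> 1" by simp
  have a1: "\<And>i. i < N \<Longrightarrow> norm (x i) = 1" using assms(2) by simp
  note a2 = assms(3) and a3 = assms(4)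
  define S where "S = (\<Sum>k\<le>N. (cmod (coeff (\<Prod>j<N. [:- z j, 1:]) k))^2 / real (N choose k))"
  have S: "S > 0" using bw_S_pos[of z N] unfolding S_def by simp
  define L where "L = (\<Sum>i<N. ln (1 + (cmod (z i))^2))"
  define LP where "LP = (\<Sum>i<N. ln (cmod (poly (pderiv (\<Prod>j<N. [:- z j, 1:])) (z i))))"
  have E: "log_energy N x = - (real N * (real N - 1) * ln 2 + LP - (real N - 1) * L)"
    unfolding LP_def L_def by (rule energy_formula[OF assms(1) a1 a2 a3 N])
  have M: "(\<Sum>i<N. ln (mu_norm N (\<Prod>j<N. [:- z j, 1:]) (z i)))
     = real N * (ln (real N) / 2 + ln S / 2) + (real N / 2 - 1) * L - LP"
  proof -
    have "(\<Sum>i<N. ln (mu_norm N (\<Prod>j<N. [:- z j, 1:]) (z i)))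
      = (\<Sum>i<N. (ln (real N) / 2 + ln S / 2) + (real N / 2 - 1) * ln (1 + (cmod (z i))^2)
          - ln (cmod (poly (pderiv (\<Prod>j<N. [:- z j, 1:])) (z i))))"
      by (intro sum.cong refl) (simp add: mu_ln[OF assms(1)] S_def)
    also have "\<dots> = real N * (ln (real N) / 2 + ln S / 2) + (real N / 2 - 1) * L - LP"
      unfolding L_def LP_def by (simp add: sum_subtractf sum.distrib sum_distrib_left)
    finally show ?thesis .
  qed
  have R1: "ln (sqrt (real N * (real N + 1)) / 2) = (ln (real N) + ln (real N + 1)) / 2 - ln 2"
    using N by (simp add: ln_div ln_sqrt ln_mult)
  have Apos: "(\<Prod>j<N. 1 + (cmod (z j))^2) > 0" by (intro prod_pos) (simp add: add_pos_nonneg)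
  have lnPi: "ln (\<Prod>j<N. 1 + (cmod (z j))^2) = L"
    unfolding L_def by (rule ln_prod) (simp, smt (verit) zero_le_power2)
  have V: "sphere_integral (\<lambda>p. \<Prod>j<N. (norm (p - x j))\<^sup>2) = 4^N / (\<Prod>j<N. 1 + (cmod (z j))^2) * S / (real N + 1)"
    unfolding S_def by (rule sphere_int[OF a1 a2 a3])
  have R2: "ln (sqrt (sphere_integral (\<lambda>p. \<Prod>j<N. (norm (p - x j))\<^sup>2)))
      = (2 * real N * ln 2 + ln S - L - ln (real N + 1)) / 2"
  proof -
    have pos: "4^N / (\<Prod>j<N. 1 + (cmod (z j))^2) * S / (real N + 1) > 0" using Apos S by simp
    have "ln (4^N / (\<Prod>j<N. 1 + (cmod (z j))^2) * S / (real N + 1))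
        = real N * ln 4 - L + ln S - ln (real N + 1)"
    proof -
      have g: "\<And>a b w c :: real. a > 0 \<Longrightarrow> b > 0 \<Longrightarrow> w > 0 \<Longrightarrow> c > 0 \<Longrightarrow> ln (a / b * w / c) = ln a - ln b + ln w - ln c"
        by (simp add: ln_div ln_mult)
      have "ln (4^N / (\<Prod>j<N. 1 + (cmod (z j))^2) * S / (real N + 1))
         = ln (4^N) - ln (\<Prod>j<N. 1 + (cmod (z j))^2) + ln S - ln (real N + 1)"
        by (rule g) (use Apos S in simp_all)
      then show ?thesis unfolding lnPi ln_realpow .
    qed
    then show ?thesis unfolding V using pos by (simp add: ln_sqrt ln4)
  qed
  show ?thesis unfolding E M R1 R2 by (simp add: field_simps)
qed

end
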